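(* Consider real variables $a_i,b_i,c_i,d_i$, $i=1,\dots,6$, subject to the linear relations \[c_1+b_1=c_2+b_2=c_3+b_3,\qquad -a_1+d_1=-a_2+d_2=-a_3+d_3,\] \[(a_{j+3},b_{j+3},c_{j+3},d_{j+3})=(-b_j,a_j,-d_j,c_j)\quad(j=1,2,3).\] For a constant $C$ let $P_i^{C}\coloneqq b_ic_i-a_id_i+C(a_i^2+c_i^2)$ and, for parameters $x,y,w$, let $P_{(x,y,w)}\coloneqq x(P_1^C+P_4^C)+y(P_2^C+P_5^C)+w(P_3^C+P_6^C)$. Define the complex-valued linear function \[Y_{(x,y,w)}\coloneqq(c_1+b_1)+x(-c_1+b_1)+y(-c_2+b_2)+w(-c_3+b_3)+i\big((-a_1+d_1)+x(-a_1-d_1)+y(-a_2-d_2)+w(-a_3-d_3)\big).\] Let $\alpha,\beta,\gamma\ge0$ with $\alpha+\beta+\gamma<1$, and for $0\le\lambda\le1$ let $K_\lambda\coloneqq\ker(Y_{(\lambda\alpha,\lambda\beta,\lambda\gamma)})$ (both real and imaginary parts vanish), a subspace of the space of variables satisfying the relations above. Then: (1) If $\alpha,\beta,\gamma>0$ and $0<C<1-(\alpha+\beta+\gamma)$, then $P_{(\alpha,\beta,\gamma)}$ is negative definite on $K_\lambda$ for all $0\le\lambda\le1$. (2) If $\alpha,\beta>0$, $\gamma=0$, and $C,\gamma'>0$ satisfy $0<C<1-(\alpha+\beta+\gamma')$, then $P_{(\alpha,\beta,\gamma')}$ is negative definite on $K_\lambda$ for all $0\le\lambda\le1$. (3) If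 $\alpha>0$, $\beta=\gamma=0$, and $C,\beta',\gamma'>0$ satisfy $0<C<1-(\alpha+\beta'+\gamma')$, then $P_{(\alpha,\beta',\gamma')}$ is negative definite on $K_\lambda$ for all $0\le\lambda\le1$. *)

theory Defs
  imports Complex_Main
begin

text \<open>A point of the variable space is given by four coordinate functions a, b, c, d;
  only the indices 1..6 are meaningful.\<close>

definition rel :: "(nat \<Rightarrow> real) \<Rightarrow> (nat \<Rightarrow> real) \<Rightarrow> (nat \<Rightarrow> real) \<Rightarrow> (nat \<Rightarrow> real) \<Rightarrow> bool" where
  "rel a b c d \<longleftrightarrow>
     c 1 + b 1 = c 2 + b 2 \<and> c 2 + b 2 = c 3 + b 3 \<and>
     - a 1 + d 1 = - a 2 + d 2 \<and> - a 2 + d 2 = - a 3 + d 3 \<and>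
     (\<forall>j\<in>{1,2,3}. a (j+3) = - b j \<and> b (j+3) = a j \<and> c (j+3) = - d j \<and> d (j+3) = c j)"

definition Pi :: "real \<Rightarrow> (nat \<Rightarrow> real) \<Rightarrow> (nat \<Rightarrow> real) \<Rightarrow> (nat \<Rightarrow> real) \<Rightarrow> (nat \<Rightarrow> real) \<Rightarrow> nat \<Rightarrow> real" where
  "Pi C a b c d i = b i * c i - a i * d i + C * ((a i)^2 + (c i)^2)"

definition PP :: "real \<Rightarrow> real \<Rightarrow> real \<Rightarrow> real \<Rightarrow> (nat \<Rightarrow> real) \<Rightarrow> (nat \<Rightarrow> real) \<Rightarrow> (nat \<Rightarrow> real) \<Rightarrow> (nat \<Rightarrow> real) \<Rightarrow> real" where
  "PP C x y w a b c d =
     x * (Pi C a b c d 1 + Pi C a b c d 4) + y * (Pi C a b c d 2 + Pi C a b c d 5)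
     + w * (Pi C a b c d 3 + Pi C a b c d 6)"

definition Y :: "real \<Rightarrow> real \<Rightarrow> real \<Rightarrow> (nat \<Rightarrow> real) \<Rightarrow> (nat \<Rightarrow> real) \<Rightarrow> (nat \<Rightarrow> real) \<Rightarrow> (nat \<Rightarrow> real) \<Rightarrow> complex" where
  "Y x y w a b c d =
     Complex ((c 1 + b 1) + x * (- c 1 + b 1) + y * (- c 2 + b 2) + w * (- c 3 + b 3))
             ((- a 1 + d 1) + x * (- a 1 - d 1) + y * (- a 2 - d 2) + w * (- a 3 - d 3))"

definition neg_def_on_ker ::
  "real \<Rightarrow> real \<Rightarrow> real \<Rightarrow> real \<Rightarrow> real \<Rightarrow> real \<Rightarrow> real \<Rightarrow> bool" where
  "neg_def_on_ker C x y w p q r \<longleftrightarrow>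
     (\<forall>a b c d. rel a b c d \<and> Y p q r a b c d = 0 \<and>
        (\<exists>i\<in>{1..6}. a i \<noteq> 0 \<or> b i \<noteq> 0 \<or> c i \<noteq> 0 \<or> d i \<noteq> 0)
        \<longrightarrow> PP C x y w a b c d < 0)"

end

theory Submission
  imports Defs
begin

lemma cs3:
  fixes x y w t1 t2 t3 :: real
  assumes "x \<ge> 0" "y \<ge> 0" "w \<ge> 0"
  shows "(x*t1+y*t2+w*t3)^2 \<le> (x+y+w)*(x*t1^2+y*t2^2+w*t3^2)"
proof -
  have e: "(x+y+w)*(x*t1^2+y*t2^2+w*t3^2) - (x*t1+y*t2+w*t3)^2
      = x*y*(t1-t2)^2 + x*w*(t1-t3)^2 + y*w*(t2-t3)^2"
    by (simp add: power2_eq_square algebra_simps)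
  have "0 \<le> x*y*(t1-t2)^2 + x*w*(t1-t3)^2 + y*w*(t2-t3)^2"
    using assms by (intro add_nonneg_nonneg mult_nonneg_nonneg) auto
  with e show ?thesis by linarith
qed

lemma core:
  fixes C p q r x y w :: real and a b c d :: "nat \<Rightarrow> real"
  assumes p: "p > 0" and q: "q > 0" and r: "r > 0" and C: "C > 0" "C < 1 - (p+q+r)"
    and x: "0 \<le> x" "x \<le> p" and y: "0 \<le> y" "y \<le> q" and w: "0 \<le> w" "w \<le> r"
  shows "neg_def_on_ker C p q r x y w"
  unfolding neg_def_on_ker_def
proof (intro allI impI, elim conjE)
  fix a b c d :: "nat \<Rightarrow> real"
  assume R: "rel a b c d" and Y0: "Y x y w a b c d = 0"
    and nz: "\<exists>i\<in>{1..6}. a i \<noteq> 0 \<or> b i \<noteq> 0 \<or> c i \<noteq> 0 \<or> d i \<noteq> 0"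
  have r1: "c 1 + b 1 = c 2 + b 2" "c 2 + b 2 = c 3 + b 3"
    "- a 1 + d 1 = - a 2 + d 2" "- a 2 + d 2 = - a 3 + d 3"
    using R unfolding rel_def by auto
  have r4: "a 4 = - b 1" "b 4 = a 1" "c 4 = - d 1" "d 4 = c 1"
    using R unfolding rel_def by auto
  have r5: "a 5 = - b 2" "b 5 = a 2" "c 5 = - d 2" "d 5 = c 2"
    using R unfolding rel_def by (auto dest: bspec[where x=2])
  have r6: "a 6 = - b 3" "b 6 = a 3" "c 6 = - d 3" "d 6 = c 3"
    using R unfolding rel_def by (auto dest: bspec[where x=3])
  define S where "S = c 1 + b 1"
  define U where "U = d 1 - a 1"
  define t1 where "t1 = b 1 - c 1"
  define t2 where "t2 = b 2 - c 2"
  define t3 where "t3 = b 3 - c 3"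
  define v1 where "v1 = - a 1 - d 1"
  define v2 where "v2 = - a 2 - d 2"
  define v3 where "v3 = - a 3 - d 3"
  have Yre: "S + x*t1 + y*t2 + w*t3 = 0" and Yim: "U + x*v1 + y*v2 + w*v3 = 0"
    using Y0 unfolding Y_def S_def U_def t1_def t2_def t3_def v1_def v2_def v3_def
    by (auto simp: complex_eq_iff)
  define \<sigma> where "\<sigma> = p+q+r"
  define Qt where "Qt = p*t1^2+q*t2^2+r*t3^2"
  define Qv where "Qv = p*v1^2+q*v2^2+r*v3^2"
  have e2: "c 1 = S - b 1" "d 1 = U + a 1" "c 2 = S - b 2" "d 2 = U + a 2" "c 3 = S - b 3" "d 3 = U + a 3"
    using r1 unfolding S_def U_def by linarith+
  have tt: "t1 = 2*b 1 - S" "t2 = 2*b 2 - S" "t3 = 2*b 3 - S" "v1 = -2*a 1 - U" "v2 = -2*a 2 - U" "v3 = -2*a 3 - U"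
    unfolding t1_def t2_def t3_def v1_def v2_def v3_def e2 by simp_all
  have PPe: "PP C p q r a b c d = ((1+C)*\<sigma>*(S^2+U^2) - (1-C)*(Qt+Qv))/2"
    unfolding PP_def Pi_def r4 r5 r6 \<sigma>_def Qt_def Qv_def tt
    unfolding e2 by (simp add: power2_eq_square algebra_simps)
  have mono: "x*t1^2+y*t2^2+w*t3^2 \<le> Qt" "x*v1^2+y*v2^2+w*v3^2 \<le> Qv"
    unfolding Qt_def Qv_def using x y w
    by (intro add_mono mult_right_mono; simp)+
  have sx: "x+y+w \<le> \<sigma>" unfolding \<sigma>_def using x y w by linarith
  have Qt0: "Qt \<ge> 0" "Qv \<ge> 0" unfolding Qt_def Qv_def using p q r by simp_all
  have "S = -(x*t1+y*t2+w*t3)" using Yre by linarith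
  hence "S^2 = (x*t1+y*t2+w*t3)^2" by (metis power2_minus)
  also have "\<dots> \<le> (x+y+w)*(x*t1^2+y*t2^2+w*t3^2)" using cs3 x y w by simp
  also have "\<dots> \<le> \<sigma> * Qt" using sx mono x y w
    by (intro mult_mono) auto
  finally have SS: "S^2 \<le> \<sigma>*Qt" .
  have "U = -(x*v1+y*v2+w*v3)" using Yim by linarith
  hence "U^2 = (x*v1+y*v2+w*v3)^2" by (metis power2_minus)
  also have "\<dots> \<le> (x+y+w)*(x*v1^2+y*v2^2+w*v3^2)" using cs3 x y w by simp
  also have "\<dots> \<le> \<sigma> * Qv" using sx mono x y w
    by (intro mult_mono) auto
  finally have UU: "U^2 \<le> \<sigma>*Qv" .
  have pos: "Qt + Qv > 0"
  proof (rule ccontr)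
    assume "\<not> Qt + Qv > 0"
    hence "Qt = 0" "Qv = 0" using Qt0 by auto
    hence z: "t1 = 0" "t2 = 0" "t3 = 0" "v1 = 0" "v2 = 0" "v3 = 0"
      unfolding Qt_def Qv_def using p q r
      by (smt (verit) mult_pos_pos zero_less_power2 mult_nonneg_nonneg zero_le_power2)+
    hence "S = 0" "U = 0" using Yre Yim by auto
    hence all: "a 1 = 0" "b 1 = 0" "c 1 = 0" "d 1 = 0" "a 2 = 0" "b 2 = 0" "c 2 = 0" "d 2 = 0"
      "a 3 = 0" "b 3 = 0" "c 3 = 0" "d 3 = 0"
      using z r1 unfolding S_def U_def t1_def t2_def t3_def v1_def v2_def v3_def by linarith+
    from nz obtain i where i: "i \<in> {1..6}" "a i \<noteq> 0 \<or> b i \<noteq> 0 \<or> c i \<noteq> 0 \<or> d i \<noteq> 0" by blast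
    have "i = 1 \<or> i = 2 \<or> i = 3 \<or> i = 4 \<or> i = 5 \<or> i = 6" using i(1) by auto
    thus False using i(2) all r4 r5 r6 by auto
  qed
  have sp: "0 < \<sigma>" "\<sigma> < 1 - C" using p q r C unfolding \<sigma>_def by auto
  have "(1+C)*\<sigma>*\<sigma> < 1 - C"
  proof -
    have h1: "(1+C)*\<sigma> < (1+C)*(1-C)" using sp C by (intro mult_strict_left_mono) auto
    have h2: "0 \<le> (1+C)*\<sigma>" using sp C by simp
    have "(1+C)*\<sigma>*\<sigma> \<le> (1+C)*\<sigma>*(1-C)" using sp h2 by (intro mult_left_mono) auto
    also have "\<dots> < (1+C)*(1-C)*(1-C)" using sp h1 by (intro mult_strict_right_mono) auto
    also have "\<dots> \<le> 1 - C" using C sp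
      by (simp add: algebra_simps power2_eq_square)
    finally show ?thesis .
  qed
  hence "(1+C)*\<sigma>*\<sigma>*(Qt+Qv) < (1-C)*(Qt+Qv)" using pos by (intro mult_strict_right_mono) auto
  moreover have "(1+C)*\<sigma>*(S^2+U^2) \<le> (1+C)*\<sigma>*(\<sigma>*(Qt+Qv))"
    using SS UU sp C by (intro mult_left_mono) (auto simp: algebra_simps)
  ultimately show "PP C p q r a b c d < 0" unfolding PPe by (simp add: algebra_simps)
qed

theorem proposition8p9:
  fixes \<alpha> \<beta> \<gamma> :: real
  assumes "\<alpha> \<ge> 0" "\<beta> \<ge> 0" "\<gamma> \<ge> 0" "\<alpha> + \<beta> + \<gamma> < 1"
  shows "(\<forall>C. \<alpha> > 0 \<and> \<beta> > 0 \<and> \<gamma> > 0 \<and> 0 < C \<and> C < 1 - (\<alpha> + \<beta> + \<gamma>) \<longrightarrow>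
            (\<forall>l::real. 0 \<le> l \<and> l \<le> 1 \<longrightarrow>
               neg_def_on_ker C \<alpha> \<beta> \<gamma> (l*\<alpha>) (l*\<beta>) (l*\<gamma>)))
       \<and> (\<forall>C \<gamma>'. \<alpha> > 0 \<and> \<beta> > 0 \<and> \<gamma> = 0 \<and> C > 0 \<and> \<gamma>' > 0 \<and> C < 1 - (\<alpha> + \<beta> + \<gamma>') \<longrightarrow>
            (\<forall>l::real. 0 \<le> l \<and> l \<le> 1 \<longrightarrow>
               neg_def_on_ker C \<alpha> \<beta> \<gamma>' (l*\<alpha>) (l*\<beta>) (l*\<gamma>)))
       \<and> (\<forall>C \<beta>' \<gamma>'. \<alpha> > 0 \<and> \<beta> = 0 \<and> \<gamma> = 0 \<and> C > 0 \<and> \<beta>' > 0 \<and> \<gamma>' > 0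
               \<and> C < 1 - (\<alpha> + \<beta>' + \<gamma>') \<longrightarrow>
            (\<forall>l::real. 0 \<le> l \<and> l \<le> 1 \<longrightarrow>
               neg_def_on_ker C \<alpha> \<beta>' \<gamma>' (l*\<alpha>) (l*\<beta>) (l*\<gamma>)))"
proof -
  have lm: "0 \<le> l*u \<and> l*u \<le> u" if "0 \<le> l" "l \<le> 1" "0 \<le> u" for l u :: real
    using that by (simp add: mult_left_le_one_le)
  show ?thesis
    using assms lm by (auto intro!: core)
qed

end
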